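(* The polynomials $P_1=(xyz-z+y+x)^2$, $P_2=(yz-xz+xy+1)^2$, $P_3=(yz-xz-xy-1)^2$, $P_4=(xz+yz+xy-1)^2$ are extremal polynomials in the classes $Q_P(2,2,2)$ and $\sigma_P(2,2,2)$.
   Context: $\sigma_P(2,2,2)$ is the set of real polynomials $f(x,y,z)=\sum_{0\le k,\ell,m\le2}a_{k,\ell,m}x^ky^\ell z^m$ that are nonnegative on $\mathbb R^3$; $Q_P(2,2,2)$ is the set of $f\in\sigma_P(2,2,2)$ that can be written as $\sum_{j=1}^r|F_j(x,y,z)|^2$ with polynomials $F_j$. An element $f$ of a convex cone $U$ is extremal in $U$ if whenever $f=g+h$ with $g,h\in U$, both $g$ and $h$ are nonnegative multiples of $f$. *)

theory Defs
  imports Complex_Main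
begin

definition poly222 :: "(real \<Rightarrow> real \<Rightarrow> real \<Rightarrow> real) \<Rightarrow> bool" where
  "poly222 f \<longleftrightarrow> (\<exists>a :: nat \<Rightarrow> nat \<Rightarrow> nat \<Rightarrow> real.
     f = (\<lambda>x y z. \<Sum>k\<le>2. \<Sum>l\<le>2. \<Sum>m\<le>2. a k l m * x ^ k * y ^ l * z ^ m))"

definition cpoly3 :: "(real \<Rightarrow> real \<Rightarrow> real \<Rightarrow> complex) \<Rightarrow> bool" where
  "cpoly3 F \<longleftrightarrow> (\<exists>(N::nat) (c :: nat \<Rightarrow> nat \<Rightarrow> nat \<Rightarrow> complex).
     F = (\<lambda>x y z. \<Sum>k\<le>N. \<Sum>l\<le>N. \<Sum>m\<le>N.
            c k l m * complex_of_real x ^ k * complex_of_real y ^ l * complex_of_real z ^ m))"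

definition sigmaP222 :: "(real \<Rightarrow> real \<Rightarrow> real \<Rightarrow> real) set" where
  "sigmaP222 = {f. poly222 f \<and> (\<forall>x y z. f x y z \<ge> 0)}"

definition QP222 :: "(real \<Rightarrow> real \<Rightarrow> real \<Rightarrow> real) set" where
  "QP222 = {f \<in> sigmaP222. \<exists>(r::nat) F. (\<forall>j<r. cpoly3 (F j)) \<and>
              f = (\<lambda>x y z. \<Sum>j<r. (cmod (F j x y z))\<^sup>2)}"

definition extremal :: "(real \<Rightarrow> real \<Rightarrow> real \<Rightarrow> real) set \<Rightarrow> (real \<Rightarrow> real \<Rightarrow> real \<Rightarrow> real) \<Rightarrow> bool" where
  "extremal U f \<longleftrightarrow> f \<in> U \<and>
     (\<forall>g h. g \<in> U \<longrightarrow> h \<in> U \<longrightarrow> f = (\<lambda>x y z. g x y z + h x y z) \<longrightarrow>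
        (\<exists>c\<ge>0. g = (\<lambda>x y z. c * f x y z)) \<and> (\<exists>c\<ge>0. h = (\<lambda>x y z. c * f x y z)))"

end

theory Submission
  imports Defs
begin

lemma sum3: "(\<Sum>k\<le>(2::nat). f k) = f 0 + f 1 + (f 2::real)"
  by (simp add: numeral_2_eq_2)

lemma diff4:
  fixes A B C p q A' B' C' p' q' :: real
  assumes "\<forall>z. (A + B*z + C*z^2)*(p*z+q)^2 = (A' + B'*z + C'*z^2)*(p'*z+q')^2"
  shows "C*p^2 = C'*p'^2"
proof -
  have e0: "(A + B*0 + C*0^2)*(p*0+q)^2 = (A' + B'*0 + C'*0^2)*(p'*0+q')^2" using assms by blast
  have e1: "(A + B*1 + C*1^2)*(p*1+q)^2 = (A' + B'*1 + C'*1^2)*(p'*1+q')^2" using assms by blast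
  have e2: "(A + B*2 + C*2^2)*(p*2+q)^2 = (A' + B'*2 + C'*2^2)*(p'*2+q')^2" using assms by blast
  have e3: "(A + B*3 + C*3^2)*(p*3+q)^2 = (A' + B'*3 + C'*3^2)*(p'*3+q')^2" using assms by blast
  have e4: "(A + B*4 + C*4^2)*(p*4+q)^2 = (A' + B'*4 + C'*4^2)*(p'*4+q')^2" using assms by blast
  have k: "\<And>A B C p q::real. 24*(C*p^2) = (A + B*0 + C*0^2)*(p*0+q)^2 - 4*((A + B*1 + C*1^2)*(p*1+q)^2)
     + 6*((A + B*2 + C*2^2)*(p*2+q)^2) - 4*((A + B*3 + C*3^2)*(p*3+q)^2) + (A + B*4 + C*4^2)*(p*4+q)^2"
    by (simp add: algebra_simps power2_eq_square)
  have "24*(C*p^2) = 24*(C'*p'^2)"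
    unfolding k[of C p A B q] k[of C' p' A' B' q'] using e0 e1 e2 e3 e4 by simp
  then show ?thesis by simp
qed

lemma quad_zero:
  fixes A B C t0 :: real
  assumes "\<forall>t. t \<noteq> t0 \<longrightarrow> A + B*t + C*t^2 = 0"
  shows "A + B*t0 + C*t0^2 = 0"
proof -
  have "A + B*(t0+1) + C*(t0+1)^2 = 0" "A + B*(t0+2) + C*(t0+2)^2 = 0" "A + B*(t0+3) + C*(t0+3)^2 = 0"
    using assms by auto
  moreover have "A + B*t0 + C*t0^2 = 3*(A + B*(t0+1) + C*(t0+1)^2) - 3*(A + B*(t0+2) + C*(t0+2)^2) + (A + B*(t0+3) + C*(t0+3)^2)"
    by (simp add: algebra_simps power2_eq_square)
  ultimately show ?thesis by simp
qed

lemma slice: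
  fixes A B C \<alpha> \<beta> t :: real
  assumes nn: "\<forall>t. 0 \<le> A + B*t + C*t^2" and le: "\<forall>t. A + B*t + C*t^2 \<le> (\<alpha>*t+\<beta>)^2"
  shows "(A + B*t + C*t^2)*\<alpha>^2 = C*(\<alpha>*t+\<beta>)^2"
proof (cases "\<alpha> = 0")
  case True
  have h: "0 \<le> A + C*s \<and> A + C*s \<le> \<beta>^2" if "s \<ge> 0" for s
  proof -
    have "0 \<le> A + B*sqrt s + C*(sqrt s)^2" "0 \<le> A + B*(-sqrt s) + C*(-sqrt s)^2"
      "A + B*sqrt s + C*(sqrt s)^2 \<le> \<beta>^2" "A + B*(-sqrt s) + C*(-sqrt s)^2 \<le> \<beta>^2"
      using nn[rule_format, of "sqrt s"] nn[rule_format, of "-sqrt s"] le[rule_format, of "sqrt s"] le[rule_format, of "-sqrt s"] True by auto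
    then show ?thesis using that by simp
  qed
  have "C = 0"
  proof (rule ccontr)
    assume "C \<noteq> 0"
    then consider "C > 0" | "C < 0" by linarith
    then show False
    proof cases
      case 1
      have "A + C*((\<bar>\<beta>^2 - A\<bar>+1)/C) \<le> \<beta>^2" using h[of "(\<bar>\<beta>^2 - A\<bar>+1)/C"] 1 by simp
      then show False using 1 by simp
    next
      case 2
      have "(\<bar>A\<bar>+1)/(-C) \<ge> 0" using 2 by (intro divide_nonneg_pos) auto
      then have "0 \<le> A + C*((\<bar>A\<bar>+1)/(-C))" using h by blast
      then show False using 2 by simp
    qed
  qed
  then show ?thesis using True by simp
next
  case False
  define t0 where "t0 = -\<beta>/\<alpha>"
  have lin: "\<alpha>*t+\<beta> = \<alpha>*(t-t0)" for t using False by (simp add: t0_def field_simps)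
  have q0: "A + B*t0 + C*t0^2 = 0" using nn le[rule_format, of t0] lin[of t0] by (metis add_le_same_cancel1 diff_self mult_zero_right nn order_antisym power_zero_numeral add_0)
  define d where "d = B + 2*C*t0"
  have sh: "A + B*(t0+u) + C*(t0+u)^2 = d*u + C*u^2" for u
    using q0 by (simp add: d_def algebra_simps power2_eq_square)
  have "d = 0"
  proof (rule ccontr)
    assume dn: "d \<noteq> 0"
    define m where "m = \<bar>C\<bar>+1"
    have m0: "m > 0" unfolding m_def using abs_ge_zero[of C] by linarith
    define u where "u = -d/m"
    have "d*u + C*u^2 = d^2/m^2 * (C - m)"
      unfolding u_def using m0 by (simp add: field_simps power2_eq_square)
    also have "\<dots> < 0" using dn m0 by (intro mult_pos_neg) (auto simp: m_def)
    finally show False using nn[rule_format, of "t0+u"] sh[of u] by simp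
  qed
  have "A + B*t + C*t^2 = C*(t-t0)^2" using sh[of "t-t0"] \<open>d=0\<close> by simp
  then show ?thesis using lin[of t] by (simp add: power_mult_distrib)
qed


definition Zc :: "(nat\<Rightarrow>nat\<Rightarrow>nat\<Rightarrow>real) \<Rightarrow> nat \<Rightarrow> real \<Rightarrow> real \<Rightarrow> real" where
  "Zc a m x y = (\<Sum>k\<le>2. \<Sum>l\<le>2. a k l m * x^k * y^l)"
definition Xc :: "(nat\<Rightarrow>nat\<Rightarrow>nat\<Rightarrow>real) \<Rightarrow> nat \<Rightarrow> real \<Rightarrow> real \<Rightarrow> real" where
  "Xc a k y z = (\<Sum>l\<le>2. \<Sum>m\<le>2. a k l m * y^l * z^m)"
definition Yc :: "(nat\<Rightarrow>nat\<Rightarrow>nat\<Rightarrow>real) \<Rightarrow> nat \<Rightarrow> real \<Rightarrow> real \<Rightarrow> real" where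
  "Yc a l x z = (\<Sum>k\<le>2. \<Sum>m\<le>2. a k l m * x^k * z^m)"
definition Kx :: "(nat\<Rightarrow>nat\<Rightarrow>nat\<Rightarrow>real) \<Rightarrow> nat \<Rightarrow> real \<Rightarrow> real" where
  "Kx a m y = (\<Sum>l\<le>2. a 2 l m * y^l)"
definition Ky :: "(nat\<Rightarrow>nat\<Rightarrow>nat\<Rightarrow>real) \<Rightarrow> nat \<Rightarrow> real \<Rightarrow> real" where
  "Ky a m x = (\<Sum>k\<le>2. a k 2 m * x^k)"
definition Wc :: "(nat\<Rightarrow>nat\<Rightarrow>nat\<Rightarrow>real) \<Rightarrow> nat \<Rightarrow> real \<Rightarrow> real" where
  "Wc a l x = (\<Sum>k\<le>2. a k l 2 * x^k)"

definition G :: "(nat\<Rightarrow>nat\<Rightarrow>nat\<Rightarrow>real) \<Rightarrow> real \<Rightarrow> real \<Rightarrow> real \<Rightarrow> real" where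
  "G a x y z = (\<Sum>k\<le>2. \<Sum>l\<le>2. \<Sum>m\<le>2. a k l m * x^k * y^l * z^m)"

lemma G_z: "G a x y z = Zc a 0 x y + Zc a 1 x y * z + Zc a 2 x y * z^2"
  by (simp add: G_def Zc_def sum3 algebra_simps)
lemma G_x: "G a x y z = Xc a 0 y z + Xc a 1 y z * x + Xc a 2 y z * x^2"
  by (simp add: G_def Xc_def sum3 algebra_simps)
lemma G_y: "G a x y z = Yc a 0 x z + Yc a 1 x z * y + Yc a 2 x z * y^2"
  by (simp add: G_def Yc_def sum3 algebra_simps)
lemma Xc2: "Xc a 2 y z = Kx a 0 y + Kx a 1 y * z + Kx a 2 y * z^2"
  by (simp add: Xc_def Kx_def sum3 algebra_simps)
lemma Yc2: "Yc a 2 x z = Ky a 0 x + Ky a 1 x * z + Ky a 2 x * z^2"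
  by (simp add: Yc_def Ky_def sum3 algebra_simps)
lemma Zc2: "Zc a 2 x y = Wc a 0 x + Wc a 1 x * y + Wc a 2 x * y^2"
  by (simp add: Zc_def Wc_def sum3 algebra_simps)

lemma core:
  fixes a :: "nat\<Rightarrow>nat\<Rightarrow>nat\<Rightarrow>real" and L :: "real\<Rightarrow>real\<Rightarrow>real\<Rightarrow>real"
  assumes nn: "\<forall>x y z. 0 \<le> G a x y z" and le: "\<forall>x y z. G a x y z \<le> (L x y z)^2"
  and Lz: "\<forall>x y z. L x y z = az x y * z + bz x y"
  and Lx: "\<forall>x y z. L x y z = (px y * z + qx y) * x + bx y z"
  and Ly: "\<forall>x y z. L x y z = (py x * z + qy x) * y + by' x z"
  shows "\<forall>x y. Zc a 2 x y * (px y)^2 = Kx a 2 y * (az x y)^2"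
    and "\<forall>x y. Zc a 2 x y * (py x)^2 = Ky a 2 x * (az x y)^2"
    and "\<forall>x y z. G a x y z * (az x y)^2 = Zc a 2 x y * (L x y z)^2"
proof -
  show "\<forall>x y z. G a x y z * (az x y)^2 = Zc a 2 x y * (L x y z)^2"
  proof (intro allI)
    fix x y z
    have "(Zc a 0 x y + Zc a 1 x y * z + Zc a 2 x y * z^2) * (az x y)^2 = Zc a 2 x y * (az x y * z + bz x y)^2"
      by (rule slice) (use nn le Lz G_z in auto)
    then show "G a x y z * (az x y)^2 = Zc a 2 x y * (L x y z)^2" using G_z Lz by simp
  qed
  have sx: "G a x y z * (px y * z + qx y)^2 = Xc a 2 y z * (L x y z)^2" for x y z
  proof -
    have "(Xc a 0 y z + Xc a 1 y z * x + Xc a 2 y z * x^2) * (px y * z + qx y)^2 = Xc a 2 y z * ((px y * z + qx y) * x + bx y z)^2"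
      by (rule slice) (use nn le Lx G_x in auto)
    then show ?thesis using G_x Lx by simp
  qed
  have sy: "G a x y z * (py x * z + qy x)^2 = Yc a 2 x z * (L x y z)^2" for x y z
  proof -
    have "(Yc a 0 x z + Yc a 1 x z * y + Yc a 2 x z * y^2) * (py x * z + qy x)^2 = Yc a 2 x z * ((py x * z + qy x) * y + by' x z)^2"
      by (rule slice) (use nn le Ly G_y in auto)
    then show ?thesis using G_y Ly by simp
  qed
  show "\<forall>x y. Zc a 2 x y * (px y)^2 = Kx a 2 y * (az x y)^2"
  proof (intro allI)
    fix x y
    show "Zc a 2 x y * (px y)^2 = Kx a 2 y * (az x y)^2"
    proof (rule diff4, intro allI)
      fix z
      show "(Zc a 0 x y + Zc a 1 x y * z + Zc a 2 x y * z^2) * (px y * z + qx y)^2 =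
        (Kx a 0 y + Kx a 1 y * z + Kx a 2 y * z^2) * (az x y * z + bz x y)^2"
        using sx[of x y z] G_z Xc2 Lz by simp
    qed
  qed
  show "\<forall>x y. Zc a 2 x y * (py x)^2 = Ky a 2 x * (az x y)^2"
  proof (intro allI)
    fix x y
    show "Zc a 2 x y * (py x)^2 = Ky a 2 x * (az x y)^2"
    proof (rule diff4, intro allI)
      fix z
      show "(Zc a 0 x y + Zc a 1 x y * z + Zc a 2 x y * z^2) * (py x * z + qy x)^2 =
        (Ky a 0 x + Ky a 1 x * z + Ky a 2 x * z^2) * (az x y * z + bz x y)^2"
        using sy[of x y z] G_z Yc2 Lz by simp
    qed
  qed
qed


lemma finish:
  fixes L :: "real\<Rightarrow>real\<Rightarrow>real\<Rightarrow>real"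
  assumes h3: "\<forall>x y z. G a x y z * (az x y)^2 = Zc a 2 x y * (L x y z)^2"
  and Zc: "\<forall>x y. Zc a 2 x y = c*(az x y)^2"
  and Lx: "\<forall>x y z. L x y z = ax y z * x + bx y z"
  and uniq: "\<forall>x y t. az x y = 0 \<longrightarrow> t \<noteq> x \<longrightarrow> az t y \<noteq> 0"
  shows "\<forall>x y z. G a x y z = c*(L x y z)^2"
proof (intro allI)
  fix x y z
  have gen: "G a x y z = c*(L x y z)^2" if "az x y \<noteq> 0" for x y z
  proof -
    have "G a x y z * (az x y)^2 = c*(az x y)^2*(L x y z)^2" using h3 Zc by metis
    then have "(G a x y z - c*(L x y z)^2)*(az x y)^2 = 0" by (simp add: algebra_simps)
    then show ?thesis using that by simp
  qed
  show "G a x y z = c*(L x y z)^2"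
  proof (cases "az x y = 0")
    case False then show ?thesis using gen by blast
  next
    case True
    have "(Xc a 0 y z - c*(bx y z)^2) + (Xc a 1 y z - 2*c*ax y z*bx y z)*x + (Xc a 2 y z - c*(ax y z)^2)*x^2 = 0"
    proof (rule quad_zero, intro allI impI)
      fix t assume "t \<noteq> x"
      then have "az t y \<noteq> 0" using uniq True by blast
      then have "G a t y z = c*(L t y z)^2" using gen by blast
      then show "(Xc a 0 y z - c*(bx y z)^2) + (Xc a 1 y z - 2*c*ax y z*bx y z)*t + (Xc a 2 y z - c*(ax y z)^2)*t^2 = 0"
        using G_x[of a t y z] Lx by (simp add: algebra_simps power2_eq_square)
    qed
    then show ?thesis using G_x[of a x y z] Lx by (simp add: algebra_simps power2_eq_square)
  qed
qed

lemma Kconst: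
  fixes az :: "real \<Rightarrow> real \<Rightarrow> real"
  assumes "\<forall>x y. az x y \<noteq> (0::real) \<longrightarrow> U y = (V x::real)"
  and "\<forall>y. y \<noteq> 0 \<longrightarrow> az 0 y \<noteq> 0" "az 1 0 \<noteq> 0" "az 1 2 \<noteq> 0" "az 0 2 \<noteq> 0"
  shows "\<forall>y. U y = V 0"
proof (intro allI)
  fix y
  show "U y = V 0"
  proof (cases "y = 0")
    case True
    have "U 0 = V 1" "U 2 = V 1" "U 2 = V 0"
      using assms(1)[rule_format, of 1 0] assms(1)[rule_format, of 1 2] assms(1)[rule_format, of 0 2] assms(3,4,5) by auto
    then show ?thesis using True by simp
  qed (use assms in auto)
qed

lemma case1:
  assumes nn: "\<forall>x y z. 0 \<le> G a x y z" and le: "\<forall>x y z. G a x y z \<le> (x*y*z - z + y + x)^2"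
  shows "\<exists>c. \<forall>x y z. G a x y z = c*(x*y*z - z + y + x)^2"
proof -
  define L where "L = (\<lambda>x y z::real. x*y*z - z + y + x)"
  note cr = core[of a L "\<lambda>x y. x*y-1" "\<lambda>x y. x+y" "\<lambda>y. y" "\<lambda>y. 1" "\<lambda>y z. y - z" "\<lambda>x. x" "\<lambda>x. 1" "\<lambda>x z. x - z"]
  have pre: "\<forall>x y z. 0 \<le> G a x y z" "\<forall>x y z. G a x y z \<le> (L x y z)^2"
    "\<forall>x y z. L x y z = (x*y-1) * z + (x+y)"
    "\<forall>x y z. L x y z = (y * z + 1) * x + (y - z)"
    "\<forall>x y z. L x y z = (x * z + 1) * y + (x - z)"
    using nn le by (auto simp: L_def algebra_simps)
  have h1: "\<forall>x y. Zc a 2 x y * y^2 = Kx a 2 y * (x*y-1)^2"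
   and h2: "\<forall>x y. Zc a 2 x y * x^2 = Ky a 2 x * (x*y-1)^2"
   and h3: "\<forall>x y z. G a x y z * (x*y-1)^2 = Zc a 2 x y * (L x y z)^2"
    using cr[OF pre] by auto
  have rel: "Kx a 2 y * x^2 = Ky a 2 x * y^2" if "x*y \<noteq> 1" for x y
  proof -
    have "(Kx a 2 y * x^2) * (x*y-1)^2 = (Ky a 2 x * y^2) * (x*y-1)^2"
      using h1 h2 by (metis mult.assoc mult.commute)
    then show ?thesis using that by simp
  qed
  define c where "c = Ky a 2 2 / 4"
  have K: "Kx a 2 y = c * y^2" for y
  proof (cases "2*y = 1")
    case False
    then have "Kx a 2 y * 4 = Ky a 2 2 * y^2" using rel[of 2 y] by (simp add: mult.commute)
    then show ?thesis by (simp add: c_def)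
  next
    case True
    then have y: "y = 1/2" by simp
    have "Kx a 2 (1/2) * 9 = Ky a 2 3 * (1/4)" using rel[of 3 "1/2"] by (simp add: power2_eq_square)
    moreover have "Kx a 2 1 * 4 = Ky a 2 2" using rel[of 2 1] by simp
    moreover have "Kx a 2 1 * 9 = Ky a 2 3" using rel[of 3 1] by simp
    ultimately show ?thesis unfolding y by (simp add: c_def power2_eq_square)
  qed
  have Zy: "Zc a 2 x y = c*(x*y-1)^2" if "y \<noteq> 0" for x y
  proof -
    have "Zc a 2 x y * y^2 = (c*(x*y-1)^2) * y^2" using h1 K by (simp add: algebra_simps)
    then show ?thesis using that by simp
  qed
  have Zall: "\<forall>x y. Zc a 2 x y = c*(x*y-1)^2"
  proof (intro allI)
    fix x y
    have "(Wc a 0 x - c) + (Wc a 1 x + 2*c*x)*0 + (Wc a 2 x - c*x^2)*0^2 = 0"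
    proof (rule quad_zero, intro allI impI)
      fix t :: real assume "t \<noteq> 0"
      then show "(Wc a 0 x - c) + (Wc a 1 x + 2*c*x)*t + (Wc a 2 x - c*x^2)*t^2 = 0"
        using Zy[of t x] Zc2[of a x t] by (simp add: algebra_simps power2_eq_square)
    qed
    then have "Zc a 2 x 0 = c*(x*0-1)^2" using Zc2[of a x 0] by simp
    then show "Zc a 2 x y = c*(x*y-1)^2" using Zy by (cases "y = 0") auto
  qed
  have "\<forall>x y z. G a x y z = c*(L x y z)^2"
  proof (rule finish[OF h3 Zall])
    show "\<forall>x y z. L x y z = (y * z + 1) * x + (y - z)" by (rule pre(4))
    show "\<forall>x y t. x*y-1 = 0 \<longrightarrow> t \<noteq> x \<longrightarrow> t*y-1 \<noteq> (0::real)"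
      by (metis eq_iff_diff_eq_0 mult_cancel_right mult_zero_left zero_neq_one)
  qed
  then show ?thesis unfolding L_def by blast
qed


lemma caseg:
  fixes L :: "real\<Rightarrow>real\<Rightarrow>real\<Rightarrow>real" and az bz :: "real\<Rightarrow>real\<Rightarrow>real" and s :: real
  assumes nn: "\<forall>x y z. 0 \<le> G a x y z" and le: "\<forall>x y z. G a x y z \<le> (L x y z)^2"
  and Lz: "\<forall>x y z. L x y z = az x y * z + bz x y"
  and Lx: "\<forall>x y z. L x y z = (s * z + qx y) * x + bx y z"
  and Ly: "\<forall>x y z. L x y z = (1 * z + qy x) * y + by' x z"
  and s: "s^2 = 1"
  and az: "\<forall>y. y \<noteq> 0 \<longrightarrow> az 0 y \<noteq> 0" "az 1 0 \<noteq> 0" "az 1 2 \<noteq> 0" "az 0 2 \<noteq> 0"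
  and uniq: "\<forall>x y t. az x y = 0 \<longrightarrow> t \<noteq> x \<longrightarrow> az t y \<noteq> 0"
  shows "\<exists>c. \<forall>x y z. G a x y z = c*(L x y z)^2"
proof -
  note cr = core[of a L az bz "\<lambda>y. s" qx bx "\<lambda>x. 1" qy by', OF nn le Lz Lx Ly]
  have h1: "\<forall>x y. Zc a 2 x y = Kx a 2 y * (az x y)^2" using cr(1) s by simp
  have h2: "\<forall>x y. Zc a 2 x y = Ky a 2 x * (az x y)^2" using cr(2) by simp
  have "\<forall>x y. az x y \<noteq> 0 \<longrightarrow> Kx a 2 y = Ky a 2 x" using h1 h2 by (metis mult_right_cancel power_eq_0_iff)
  then have K: "\<forall>y. Kx a 2 y = Ky a 2 0" by (rule Kconst) (use az in auto)
  have Zall: "\<forall>x y. Zc a 2 x y = Ky a 2 0 * (az x y)^2" using h1 K by simp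
  show ?thesis using finish[OF cr(3) Zall Lx uniq] by blast
qed

lemma case2:
  assumes nn: "\<forall>x y z. 0 \<le> G a x y z" and le: "\<forall>x y z. G a x y z \<le> (y*z - x*z + x*y + 1)^2"
  shows "\<exists>c. \<forall>x y z. G a x y z = c*(y*z - x*z + x*y + 1)^2"
proof -
  define L where "L = (\<lambda>x y z::real. y*z - x*z + x*y + 1)"
  have "\<exists>c. \<forall>x y z. G a x y z = c*(L x y z)^2"
  proof (rule caseg[where az = "\<lambda>x y. y - x" and bz = "\<lambda>x y. x*y+1" and s = "-1" and qx = "\<lambda>y. y"
      and bx = "\<lambda>y z. y*z+1" and qy = "\<lambda>x. x" and by' = "\<lambda>x z. 1 - x*z"])
  qed (use nn le in \<open>auto simp: L_def algebra_simps\<close>)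
  then show ?thesis unfolding L_def .
qed

lemma case3:
  assumes nn: "\<forall>x y z. 0 \<le> G a x y z" and le: "\<forall>x y z. G a x y z \<le> (y*z - x*z - x*y - 1)^2"
  shows "\<exists>c. \<forall>x y z. G a x y z = c*(y*z - x*z - x*y - 1)^2"
proof -
  define L where "L = (\<lambda>x y z::real. y*z - x*z - x*y - 1)"
  have "\<exists>c. \<forall>x y z. G a x y z = c*(L x y z)^2"
  proof (rule caseg[where az = "\<lambda>x y. y - x" and bz = "\<lambda>x y. -x*y-1" and s = "-1" and qx = "\<lambda>y. -y"
      and bx = "\<lambda>y z. y*z-1" and qy = "\<lambda>x. -x" and by' = "\<lambda>x z. -x*z - 1"])
  qed (use nn le in \<open>auto simp: L_def algebra_simps\<close>)
  then show ?thesis unfolding L_def .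
qed

lemma case4:
  assumes nn: "\<forall>x y z. 0 \<le> G a x y z" and le: "\<forall>x y z. G a x y z \<le> (x*z + y*z + x*y - 1)^2"
  shows "\<exists>c. \<forall>x y z. G a x y z = c*(x*z + y*z + x*y - 1)^2"
proof -
  define L where "L = (\<lambda>x y z::real. x*z + y*z + x*y - 1)"
  have "\<exists>c. \<forall>x y z. G a x y z = c*(L x y z)^2"
  proof (rule caseg[where az = "\<lambda>x y. x + y" and bz = "\<lambda>x y. x*y-1" and s = "1" and qx = "\<lambda>y. y"
      and bx = "\<lambda>y z. y*z-1" and qy = "\<lambda>x. x" and by' = "\<lambda>x z. x*z - 1"])
  qed (use nn le in \<open>auto simp: L_def algebra_simps\<close>)
  then show ?thesis unfolding L_def .
qed


lemma sum1: "(\<Sum>k\<le>(1::nat). f k) = f 0 + (f 1::'a::comm_monoid_add)"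
  by simp

lemma sum3c: "(\<Sum>k\<le>(2::nat). f k) = f 0 + f 1 + (f 2::'a::comm_monoid_add)"
  by (simp add: numeral_2_eq_2 add.assoc)

lemma memQ:
  fixes L :: "real\<Rightarrow>real\<Rightarrow>real\<Rightarrow>real" and b a :: "nat\<Rightarrow>nat\<Rightarrow>nat\<Rightarrow>real"
  assumes Lb: "\<And>x y z. L x y z = (\<Sum>k\<le>1. \<Sum>l\<le>1. \<Sum>m\<le>1. b k l m * x^k*y^l*z^m)"
  and Pa: "\<And>x y z. (L x y z)^2 = (\<Sum>k\<le>2. \<Sum>l\<le>2. \<Sum>m\<le>2. a k l m * x^k*y^l*z^m)"
  shows "(\<lambda>x y z. (L x y z)^2) \<in> QP222"
proof -
  have sig: "(\<lambda>x y z. (L x y z)^2) \<in> sigmaP222"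
  proof -
    have "poly222 (\<lambda>x y z. (L x y z)^2)" unfolding poly222_def
      by (rule exI[of _ a]) (simp add: Pa)
    then show ?thesis unfolding sigmaP222_def by simp
  qed
  define F where "F = (\<lambda>(j::nat) x y z. complex_of_real (L x y z))"
  have cp: "cpoly3 (F j)" for j
    unfolding cpoly3_def
  proof (intro exI[of _ "1::nat"] exI[of _ "\<lambda>k l m. complex_of_real (b k l m)"])
    show "F j = (\<lambda>x y z. \<Sum>k\<le>1. \<Sum>l\<le>1. \<Sum>m\<le>1. complex_of_real (b k l m) * complex_of_real x ^ k * complex_of_real y ^ l * complex_of_real z ^ m)"
      unfolding F_def by (intro ext) (simp add: Lb)
  qed
  have "(\<lambda>x y z. (L x y z)^2) = (\<lambda>x y z. \<Sum>j<1. (cmod (F j x y z))\<^sup>2)"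
    by (simp add: F_def)
  then show ?thesis unfolding QP222_def using sig cp by blast
qed

lemma extr:
  assumes PQ: "P \<in> QP222"
  and key: "\<forall>g\<in>sigmaP222. (\<forall>x y z. g x y z \<le> P x y z) \<longrightarrow> (\<exists>c\<ge>0. g = (\<lambda>x y z. c * P x y z))"
  shows "extremal QP222 P \<and> extremal sigmaP222 P"
proof -
  have QS: "QP222 \<subseteq> sigmaP222" unfolding QP222_def by auto
  have E: "(\<exists>c\<ge>0. g = (\<lambda>x y z. c * P x y z)) \<and> (\<exists>c\<ge>0. h = (\<lambda>x y z. c * P x y z))"
    if g: "g \<in> sigmaP222" and h: "h \<in> sigmaP222" and s: "P = (\<lambda>x y z. g x y z + h x y z)" for g h
  proof
    have "\<forall>x y z. g x y z \<le> P x y z" using h s unfolding sigmaP222_def by auto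
    then show "\<exists>c\<ge>0. g = (\<lambda>x y z. c * P x y z)" using key g by blast
    have "\<forall>x y z. h x y z \<le> P x y z" using g s unfolding sigmaP222_def by auto
    then show "\<exists>c\<ge>0. h = (\<lambda>x y z. c * P x y z)" using key h by blast
  qed
  show ?thesis unfolding extremal_def using PQ QS E by blast
qed

lemma poly_G: "poly222 g \<Longrightarrow> \<exists>a. g = G a"
  unfolding poly222_def G_def by (auto simp: fun_eq_iff)

lemma P1Q: "(\<lambda>x y z. (x*y*z - z + y + x)\<^sup>2) \<in> QP222"
proof (rule memQ[where b = "(\<lambda>k l m. if (k,l,m) = (0,0,1) then -1 else if (k,l,m) = (0,1,0) then 1 else if (k,l,m) = (1,0,0) then 1 else if (k,l,m) = (1,1,1) then 1 else 0)" and a = "(\<lambda>k l m. if (k,l,m) = (0,0,2) then 1 else if (k,l,m) = (0,1,1) then -2 else if (k,l,m) = (0,2,0) then 1 else if (k,l,m) = (1,0,1) then -2 else if (k,l,m) = (1,1,0) then 2 else if (k,l,m) = (1,1,2) then -2 else if (k,l,m) = (1,2,1) then 2 else if (k,l,m) = (2,0,0) then 1 else if (k,l,m) = (2,1,1) then 2 else if (k,l,m) = (2,2,2) then 1 else 0)"])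
  fix x y z :: real
  show "x*y*z - z + y + x = (\<Sum>k\<le>1. \<Sum>l\<le>1. \<Sum>m\<le>1. ((\<lambda>k l m. if (k,l,m) = (0,0,1) then -1 else if (k,l,m) = (0,1,0) then 1 else if (k,l,m) = (1,0,0) then 1 else if (k,l,m) = (1,1,1) then 1 else 0)) k l m * x^k*y^l*z^m)"
    by (simp add: sum1 algebra_simps)
  show "(x*y*z - z + y + x)^2 = (\<Sum>k\<le>2. \<Sum>l\<le>2. \<Sum>m\<le>2. ((\<lambda>k l m. if (k,l,m) = (0,0,2) then 1 else if (k,l,m) = (0,1,1) then -2 else if (k,l,m) = (0,2,0) then 1 else if (k,l,m) = (1,0,1) then -2 else if (k,l,m) = (1,1,0) then 2 else if (k,l,m) = (1,1,2) then -2 else if (k,l,m) = (1,2,1) then 2 else if (k,l,m) = (2,0,0) then 1 else if (k,l,m) = (2,1,1) then 2 else if (k,l,m) = (2,2,2) then 1 else 0)) k l m * x^k*y^l*z^m)"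
    by (simp add: sum3c algebra_simps power2_eq_square)
qed

lemma P1key: "\<forall>g\<in>sigmaP222. (\<forall>x y z. g x y z \<le> (\<lambda>x y z. (x*y*z - z + y + x)\<^sup>2) x y z) \<longrightarrow>
   (\<exists>c\<ge>0. g = (\<lambda>x y z. c * (\<lambda>x y z. (x*y*z - z + y + x)\<^sup>2) x y z))"
proof (intro ballI impI)
  fix g assume g: "g \<in> sigmaP222" and le: "\<forall>x y z. g x y z \<le> (\<lambda>x y z. (x*y*z - z + y + x)\<^sup>2) x y z"
  obtain a where ga: "g = G a" using g poly_G unfolding sigmaP222_def by blast
  have nn: "\<forall>x y z. 0 \<le> G a x y z" using g ga unfolding sigmaP222_def by auto
  obtain c where c: "\<forall>x y z. G a x y z = c*(x*y*z - z + y + x)^2"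
    using case1[OF nn] le ga by auto
  have "0 \<le> G a 1 0 0" using nn by blast
  then have "c \<ge> 0" using c by simp
  then show "\<exists>c\<ge>0. g = (\<lambda>x y z. c * (\<lambda>x y z. (x*y*z - z + y + x)\<^sup>2) x y z)"
    using c ga by (auto simp: fun_eq_iff)
qed

lemma P2Q: "(\<lambda>x y z. (y*z - x*z + x*y + 1)\<^sup>2) \<in> QP222"
proof (rule memQ[where b = "(\<lambda>k l m. if (k,l,m) = (0,0,0) then 1 else if (k,l,m) = (0,1,1) then 1 else if (k,l,m) = (1,0,1) then -1 else if (k,l,m) = (1,1,0) then 1 else 0)" and a = "(\<lambda>k l m. if (k,l,m) = (0,0,0) then 1 else if (k,l,m) = (0,1,1) then 2 else if (k,l,m) = (0,2,2) then 1 else if (k,l,m) = (1,0,1) then -2 else if (k,l,m) = (1,1,0) then 2 else if (k,l,m) = (1,1,2) then -2 else if (k,l,m) = (1,2,1) then 2 else if (k,l,m) = (2,0,2) then 1 else if (k,l,m) = (2,1,1) then -2 else if (k,l,m) = (2,2,0) then 1 else 0)"])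
  fix x y z :: real
  show "y*z - x*z + x*y + 1 = (\<Sum>k\<le>1. \<Sum>l\<le>1. \<Sum>m\<le>1. ((\<lambda>k l m. if (k,l,m) = (0,0,0) then 1 else if (k,l,m) = (0,1,1) then 1 else if (k,l,m) = (1,0,1) then -1 else if (k,l,m) = (1,1,0) then 1 else 0)) k l m * x^k*y^l*z^m)"
    by (simp add: sum1 algebra_simps)
  show "(y*z - x*z + x*y + 1)^2 = (\<Sum>k\<le>2. \<Sum>l\<le>2. \<Sum>m\<le>2. ((\<lambda>k l m. if (k,l,m) = (0,0,0) then 1 else if (k,l,m) = (0,1,1) then 2 else if (k,l,m) = (0,2,2) then 1 else if (k,l,m) = (1,0,1) then -2 else if (k,l,m) = (1,1,0) then 2 else if (k,l,m) = (1,1,2) then -2 else if (k,l,m) = (1,2,1) then 2 else if (k,l,m) = (2,0,2) then 1 else if (k,l,m) = (2,1,1) then -2 else if (k,l,m) = (2,2,0) then 1 else 0)) k l m * x^k*y^l*z^m)"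
    by (simp add: sum3c algebra_simps power2_eq_square)
qed

lemma P2key: "\<forall>g\<in>sigmaP222. (\<forall>x y z. g x y z \<le> (\<lambda>x y z. (y*z - x*z + x*y + 1)\<^sup>2) x y z) \<longrightarrow>
   (\<exists>c\<ge>0. g = (\<lambda>x y z. c * (\<lambda>x y z. (y*z - x*z + x*y + 1)\<^sup>2) x y z))"
proof (intro ballI impI)
  fix g assume g: "g \<in> sigmaP222" and le: "\<forall>x y z. g x y z \<le> (\<lambda>x y z. (y*z - x*z + x*y + 1)\<^sup>2) x y z"
  obtain a where ga: "g = G a" using g poly_G unfolding sigmaP222_def by blast
  have nn: "\<forall>x y z. 0 \<le> G a x y z" using g ga unfolding sigmaP222_def by auto
  obtain c where c: "\<forall>x y z. G a x y z = c*(y*z - x*z + x*y + 1)^2"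
    using case2[OF nn] le ga by auto
  have "0 \<le> G a 0 0 0" using nn by blast
  then have "c \<ge> 0" using c by simp
  then show "\<exists>c\<ge>0. g = (\<lambda>x y z. c * (\<lambda>x y z. (y*z - x*z + x*y + 1)\<^sup>2) x y z)"
    using c ga by (auto simp: fun_eq_iff)
qed

lemma P3Q: "(\<lambda>x y z. (y*z - x*z - x*y - 1)\<^sup>2) \<in> QP222"
proof (rule memQ[where b = "(\<lambda>k l m. if (k,l,m) = (0,0,0) then -1 else if (k,l,m) = (0,1,1) then 1 else if (k,l,m) = (1,0,1) then -1 else if (k,l,m) = (1,1,0) then -1 else 0)" and a = "(\<lambda>k l m. if (k,l,m) = (0,0,0) then 1 else if (k,l,m) = (0,1,1) then -2 else if (k,l,m) = (0,2,2) then 1 else if (k,l,m) = (1,0,1) then 2 else if (k,l,m) = (1,1,0) then 2 else if (k,l,m) = (1,1,2) then -2 else if (k,l,m) = (1,2,1) then -2 else if (k,l,m) = (2,0,2) then 1 else if (k,l,m) = (2,1,1) then 2 else if (k,l,m) = (2,2,0) then 1 else 0)"])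
  fix x y z :: real
  show "y*z - x*z - x*y - 1 = (\<Sum>k\<le>1. \<Sum>l\<le>1. \<Sum>m\<le>1. ((\<lambda>k l m. if (k,l,m) = (0,0,0) then -1 else if (k,l,m) = (0,1,1) then 1 else if (k,l,m) = (1,0,1) then -1 else if (k,l,m) = (1,1,0) then -1 else 0)) k l m * x^k*y^l*z^m)"
    by (simp add: sum1 algebra_simps)
  show "(y*z - x*z - x*y - 1)^2 = (\<Sum>k\<le>2. \<Sum>l\<le>2. \<Sum>m\<le>2. ((\<lambda>k l m. if (k,l,m) = (0,0,0) then 1 else if (k,l,m) = (0,1,1) then -2 else if (k,l,m) = (0,2,2) then 1 else if (k,l,m) = (1,0,1) then 2 else if (k,l,m) = (1,1,0) then 2 else if (k,l,m) = (1,1,2) then -2 else if (k,l,m) = (1,2,1) then -2 else if (k,l,m) = (2,0,2) then 1 else if (k,l,m) = (2,1,1) then 2 else if (k,l,m) = (2,2,0) then 1 else 0)) k l m * x^k*y^l*z^m)"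
    by (simp add: sum3c algebra_simps power2_eq_square)
qed

lemma P3key: "\<forall>g\<in>sigmaP222. (\<forall>x y z. g x y z \<le> (\<lambda>x y z. (y*z - x*z - x*y - 1)\<^sup>2) x y z) \<longrightarrow>
   (\<exists>c\<ge>0. g = (\<lambda>x y z. c * (\<lambda>x y z. (y*z - x*z - x*y - 1)\<^sup>2) x y z))"
proof (intro ballI impI)
  fix g assume g: "g \<in> sigmaP222" and le: "\<forall>x y z. g x y z \<le> (\<lambda>x y z. (y*z - x*z - x*y - 1)\<^sup>2) x y z"
  obtain a where ga: "g = G a" using g poly_G unfolding sigmaP222_def by blast
  have nn: "\<forall>x y z. 0 \<le> G a x y z" using g ga unfolding sigmaP222_def by auto
  obtain c where c: "\<forall>x y z. G a x y z = c*(y*z - x*z - x*y - 1)^2"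
    using case3[OF nn] le ga by auto
  have "0 \<le> G a 0 0 0" using nn by blast
  then have "c \<ge> 0" using c by simp
  then show "\<exists>c\<ge>0. g = (\<lambda>x y z. c * (\<lambda>x y z. (y*z - x*z - x*y - 1)\<^sup>2) x y z)"
    using c ga by (auto simp: fun_eq_iff)
qed

lemma P4Q: "(\<lambda>x y z. (x*z + y*z + x*y - 1)\<^sup>2) \<in> QP222"
proof (rule memQ[where b = "(\<lambda>k l m. if (k,l,m) = (0,0,0) then -1 else if (k,l,m) = (0,1,1) then 1 else if (k,l,m) = (1,0,1) then 1 else if (k,l,m) = (1,1,0) then 1 else 0)" and a = "(\<lambda>k l m. if (k,l,m) = (0,0,0) then 1 else if (k,l,m) = (0,1,1) then -2 else if (k,l,m) = (0,2,2) then 1 else if (k,l,m) = (1,0,1) then -2 else if (k,l,m) = (1,1,0) then -2 else if (k,l,m) = (1,1,2) then 2 else if (k,l,m) = (1,2,1) then 2 else if (k,l,m) = (2,0,2) then 1 else if (k,l,m) = (2,1,1) then 2 else if (k,l,m) = (2,2,0) then 1 else 0)"])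
  fix x y z :: real
  show "x*z + y*z + x*y - 1 = (\<Sum>k\<le>1. \<Sum>l\<le>1. \<Sum>m\<le>1. ((\<lambda>k l m. if (k,l,m) = (0,0,0) then -1 else if (k,l,m) = (0,1,1) then 1 else if (k,l,m) = (1,0,1) then 1 else if (k,l,m) = (1,1,0) then 1 else 0)) k l m * x^k*y^l*z^m)"
    by (simp add: sum1 algebra_simps)
  show "(x*z + y*z + x*y - 1)^2 = (\<Sum>k\<le>2. \<Sum>l\<le>2. \<Sum>m\<le>2. ((\<lambda>k l m. if (k,l,m) = (0,0,0) then 1 else if (k,l,m) = (0,1,1) then -2 else if (k,l,m) = (0,2,2) then 1 else if (k,l,m) = (1,0,1) then -2 else if (k,l,m) = (1,1,0) then -2 else if (k,l,m) = (1,1,2) then 2 else if (k,l,m) = (1,2,1) then 2 else if (k,l,m) = (2,0,2) then 1 else if (k,l,m) = (2,1,1) then 2 else if (k,l,m) = (2,2,0) then 1 else 0)) k l m * x^k*y^l*z^m)"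
    by (simp add: sum3c algebra_simps power2_eq_square)
qed

lemma P4key: "\<forall>g\<in>sigmaP222. (\<forall>x y z. g x y z \<le> (\<lambda>x y z. (x*z + y*z + x*y - 1)\<^sup>2) x y z) \<longrightarrow>
   (\<exists>c\<ge>0. g = (\<lambda>x y z. c * (\<lambda>x y z. (x*z + y*z + x*y - 1)\<^sup>2) x y z))"
proof (intro ballI impI)
  fix g assume g: "g \<in> sigmaP222" and le: "\<forall>x y z. g x y z \<le> (\<lambda>x y z. (x*z + y*z + x*y - 1)\<^sup>2) x y z"
  obtain a where ga: "g = G a" using g poly_G unfolding sigmaP222_def by blast
  have nn: "\<forall>x y z. 0 \<le> G a x y z" using g ga unfolding sigmaP222_def by auto
  obtain c where c: "\<forall>x y z. G a x y z = c*(x*z + y*z + x*y - 1)^2"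
    using case4[OF nn] le ga by auto
  have "0 \<le> G a 0 0 0" using nn by blast
  then have "c \<ge> 0" using c by simp
  then show "\<exists>c\<ge>0. g = (\<lambda>x y z. c * (\<lambda>x y z. (x*z + y*z + x*y - 1)\<^sup>2) x y z)"
    using c ga by (auto simp: fun_eq_iff)
qed

theorem proposition6:
  shows "\<forall>P \<in> {(\<lambda>x y z. (x*y*z - z + y + x)\<^sup>2),
                 (\<lambda>x y z. (y*z - x*z + x*y + 1)\<^sup>2),
                 (\<lambda>x y z. (y*z - x*z - x*y - 1)\<^sup>2),
                 (\<lambda>x y z. (x*z + y*z + x*y - 1)\<^sup>2)} :: (real \<Rightarrow> real \<Rightarrow> real \<Rightarrow> real) set.
           extremal QP222 P \<and> extremal sigmaP222 P"
  using extr[OF P1Q P1key] extr[OF P2Q P2key] extr[OF P3Q P3key] extr[OF P4Q P4key] by blast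

end
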